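(* Let $L\ge 1$ and, for each layer $\ell\in\{1,\dots,L\}$, let $K^{\ell}\ge 1$ and $d^{\ell}\ge 1$ be integers and $a^{\ell}$ a real number with $0\le a^{\ell}<1$. Consider the linear one-dimensional network on real sequences indexed by $\mathbb{Z}$ whose $\ell$-th layer maps $y^{\ell-1}$ to $y^{\ell}$ via $$y^{\ell}_i - a^{\ell}\, y^{\ell}_{i-1} = \sum_{p=0}^{K^{\ell}-1} \frac{1-a^{\ell}}{K^{\ell}}\, y^{\ell-1}_{i-d^{\ell}p}\qquad\text{for all } i\in\mathbb{Z}$$ (i.e. uniform moving-average coefficients of length $K^{\ell}$ with dilation $d^{\ell}$, and autoregressive coefficients $1,-a^{\ell}$), where $y^0$ is the network input and $y^L$ its output. Then the radius of the effective receptive field of this network satisfies $$r(\mathrm{ERF})^2 = \sum_{\ell=1}^{L}\left[\frac{(d^{\ell})^2\big((K^{\ell})^2-1\big)}{12} + \frac{a^{\ell}}{(1-a^{\ell})^2}\right].$$ In particular, when $a^{\ell}=0$ for all $\ell$ (so that each layer is an ordinary, possibly dilated, convolution), $r(\mathrm{ERF})^2=\sum_{\ell=1}^{L}(d^{\ell})^2\big((K^{\ell})^2-1\big)/12$.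
   Context: Each layer relation is interpreted as the linear map $y^{\ell}=f^{\ell}*y^{\ell-1}$, where $*$ is convolution of sequences on $\mathbb{Z}$ and $f^{\ell}=\tilde a^{\ell}*w^{\ell}$, with $w^{\ell}_{d^{\ell}p}=(1-a^{\ell})/K^{\ell}$ for $p=0,\dots,K^{\ell}-1$ (and $w^{\ell}_j=0$ otherwise) and $\tilde a^{\ell}_j=(a^{\ell})^j$ for $j\ge 0$, $\tilde a^{\ell}_j=0$ for $j<0$ (the inverse convolution of the autoregressive filter $(1,-a^{\ell})$, i.e. $y^{\ell}_i=\sum_{j\ge0}(a^{\ell})^j(w^{\ell}*y^{\ell-1})_{i-j}$). For this network the quantity $g(p)=\left|\partial y^{L}_i/\partial y^{0}_{i-p}\right|$ does not depend on $i$. The effective receptive field is the normalized distribution $\mathrm{ERF}(p)=g(p)/\sum_{q\in\mathbb{Z}} g(q)$, $p\in\mathbb{Z}$, and its radius $r(\mathrm{ERF})$ is defined by $r(\mathrm{ERF})^2=\sum_{p}p^2\,\mathrm{ERF}(p)-\big(\sum_p |p|\,\mathrm{ERF}(p)\big)^2$. *)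

theory Defs
  imports "HOL-Analysis.Analysis"
begin

definition conv :: "(int \<Rightarrow> real) \<Rightarrow> (int \<Rightarrow> real) \<Rightarrow> int \<Rightarrow> real" where
  "conv f g i = (\<Sum>\<^sub>\<infinity>j\<in>UNIV. f j * g (i - j))"

definition delta :: "int \<Rightarrow> real" where
  "delta j = (if j = 0 then 1 else 0)"

definition ma_filter :: "real \<Rightarrow> nat \<Rightarrow> nat \<Rightarrow> int \<Rightarrow> real" where
  "ma_filter a K d j =
     (if \<exists>p::nat. p < K \<and> j = int d * int p then (1 - a) / real K else 0)"

text \<open>Inverse of the autoregressive filter (1, -a): a^j for j >= 0, 0 otherwise.\<close>
definition ar_inv :: "real \<Rightarrow> int \<Rightarrow> real" where
  "ar_inv a j = (if 0 \<le> j then a ^ nat j else 0)"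

definition layer_filter :: "real \<Rightarrow> nat \<Rightarrow> nat \<Rightarrow> int \<Rightarrow> real" where
  "layer_filter a K d = conv (ar_inv a) (ma_filter a K d)"

fun net_filter :: "(nat \<Rightarrow> real) \<Rightarrow> (nat \<Rightarrow> nat) \<Rightarrow> (nat \<Rightarrow> nat) \<Rightarrow> nat \<Rightarrow> int \<Rightarrow> real" where
  "net_filter a K d 0 = delta"
| "net_filter a K d (Suc l) =
     conv (layer_filter (a (Suc l)) (K (Suc l)) (d (Suc l))) (net_filter a K d l)"

text \<open>g(p) = |d y^L_i / d y^0_{i-p}| = |(f^L * ... * f^1)_p|.\<close>
definition erf_g :: "(nat \<Rightarrow> real) \<Rightarrow> (nat \<Rightarrow> nat) \<Rightarrow> (nat \<Rightarrow> nat) \<Rightarrow> nat \<Rightarrow> int \<Rightarrow> real" where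
  "erf_g a K d L p = \<bar>net_filter a K d L p\<bar>"

definition ERF :: "(nat \<Rightarrow> real) \<Rightarrow> (nat \<Rightarrow> nat) \<Rightarrow> (nat \<Rightarrow> nat) \<Rightarrow> nat \<Rightarrow> int \<Rightarrow> real" where
  "ERF a K d L p = erf_g a K d L p / (\<Sum>\<^sub>\<infinity>q\<in>UNIV. erf_g a K d L q)"

definition erf_radius :: "(int \<Rightarrow> real) \<Rightarrow> real" where
  "erf_radius e = sqrt ((\<Sum>\<^sub>\<infinity>p\<in>UNIV. (real_of_int p)\<^sup>2 * e p)
                        - (\<Sum>\<^sub>\<infinity>p\<in>UNIV. \<bar>real_of_int p\<bar> * e p)\<^sup>2)"

end

theory Submission
  imports Defs
begin



definition mom :: "(int \<Rightarrow> real) \<Rightarrow> real \<Rightarrow> real \<Rightarrow> real \<Rightarrow> bool" where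
 "mom f c m s \<longleftrightarrow> (\<forall>j. 0 \<le> f j) \<and> (\<forall>j<0. f j = 0) \<and> (\<lambda>n. f (int n)) sums c
    \<and> (\<lambda>n. real n * f (int n)) sums m \<and> (\<lambda>n. (real n)^2 * f (int n)) sums s"

lemma conv_neg:
  assumes "\<forall>j<0. f j = 0" "\<forall>j<0. g j = 0" "i < 0"
  shows "conv f g i = 0"
proof -
  have "f x * g (i - x) = 0" for x
  proof (cases "x < 0")
    case True then show ?thesis using assms by simp
  next
    case False then have "i - x < 0" using assms by simp
    then show ?thesis using assms by simp
  qed
  then have "(\<lambda>j. f j * g (i - j)) = (\<lambda>_. 0)" by (intro ext) blast
    then show ?thesis unfolding conv_def by simp
qed

lemma conv_nat:
  assumes "\<forall>j<0. f j = 0" "\<forall>j<0. g j = 0"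
  shows "conv f g (int n) = (\<Sum>i\<le>n. f (int i) * g (int (n - i)))"
proof -
  have "conv f g (int n) = infsum (\<lambda>j. f j * g (int n - j)) (int ` {..n})"
    unfolding conv_def
  proof (rule infsum_cong_neutral)
    fix x assume "x \<in> UNIV - int ` {..n}"
    then have "x < 0 \<or> x > int n"
      by (metis DiffD2 atMost_iff image_eqI int_nat_eq linorder_not_less nat_le_iff)
    then show "f x * g (int n - x) = 0" using assms by auto
  qed auto
  also have "\<dots> = (\<Sum>j\<in>int ` {..n}. f j * g (int n - j))" by simp
  also have "\<dots> = (\<Sum>i\<le>n. f (int i) * g (int (n - i)))"
    by (subst sum.reindex) (auto simp: of_nat_diff)
  finally show ?thesis .
qed

lemma cp:
  fixes a b :: "nat \<Rightarrow> real"
  assumes "\<And>n. 0 \<le> a n" "\<And>n. 0 \<le> b n" "a sums A" "b sums B"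
  shows "(\<lambda>k. \<Sum>i\<le>k. a i * b (k - i)) sums (A * B)"
proof -
  have "summable (\<lambda>k. norm (a k))" "summable (\<lambda>k. norm (b k))"
    using assms by (auto simp: sums_iff)
  from Cauchy_product_sums[OF this] show ?thesis
    using assms by (simp add: sums_iff)
qed

lemma mom_conv:
  assumes f: "mom f c1 m1 s1" and g: "mom g c2 m2 s2"
  shows "mom (conv f g) (c1 * c2) (m1*c2 + c1*m2) (s1*c2 + 2*m1*m2 + c1 * s2)"
proof -
  define F where "F = (\<lambda>n. f (int n))"
  define G where "G = (\<lambda>n. g (int n))"
  have fn: "\<forall>j<0. f j = 0" and gn: "\<forall>j<0. g j = 0" and fp: "\<And>j. 0 \<le> f j" and gp: "\<And>j. 0 \<le> g j"
    using f g by (auto simp: mom_def)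
  have Fs: "F sums c1" "(\<lambda>n. real n * F n) sums m1" "(\<lambda>n. (real n)^2 * F n) sums s1"
    using f by (auto simp: mom_def F_def)
  have Gs: "G sums c2" "(\<lambda>n. real n * G n) sums m2" "(\<lambda>n. (real n)^2 * G n) sums s2"
    using g by (auto simp: mom_def G_def)
  have Fp: "\<And>n. 0 \<le> F n" "\<And>n. 0 \<le> real n * F n" "\<And>n. 0 \<le> (real n)^2 * F n"
    using fp by (auto simp: F_def)
  have Gp: "\<And>n. 0 \<le> G n" "\<And>n. 0 \<le> real n * G n" "\<And>n. 0 \<le> (real n)^2 * G n"
    using gp by (auto simp: G_def)
  have cv: "conv f g (int k) = (\<Sum>i\<le>k. F i * G (k - i))" for k
    using conv_nat[OF fn gn] by (simp add: F_def G_def)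
  have S0: "(\<lambda>k. conv f g (int k)) sums (c1 * c2)"
    using cp[OF Fp(1) Gp(1) Fs(1) Gs(1)] by (simp add: cv)
  have "(\<lambda>k. (\<Sum>i\<le>k. (real i * F i) * G (k - i)) + (\<Sum>i\<le>k. F i * (real (k-i) * G (k - i))))
     sums (m1*c2 + c1*m2)"
    by (rule sums_add[OF cp[OF Fp(2) Gp(1) Fs(2) Gs(1)] cp[OF Fp(1) Gp(2) Fs(1) Gs(2)]])
  also have "(\<lambda>k. (\<Sum>i\<le>k. (real i * F i) * G (k - i)) + (\<Sum>i\<le>k. F i * (real (k-i) * G (k - i))))
     = (\<lambda>k. real k * conv f g (int k))"
  proof
    fix k
    have "real k * conv f g (int k) = (\<Sum>i\<le>k. real k * (F i * G (k - i)))"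
      by (simp add: cv sum_distrib_left)
    also have "\<dots> = (\<Sum>i\<le>k. (real i * F i) * G (k - i) + F i * (real (k-i) * G (k - i)))"
      by (rule sum.cong) (auto simp: of_nat_diff algebra_simps)
    also have "\<dots> = (\<Sum>i\<le>k. (real i * F i) * G (k - i)) + (\<Sum>i\<le>k. F i * (real (k-i) * G (k - i)))"
      by (simp add: sum.distrib)
    finally show "(\<Sum>i\<le>k. (real i * F i) * G (k - i)) + (\<Sum>i\<le>k. F i * (real (k-i) * G (k - i)))
       = real k * conv f g (int k)" by simp
  qed
  finally have S1: "(\<lambda>k. real k * conv f g (int k)) sums (m1*c2 + c1*m2)" .
  have "(\<lambda>k. (\<Sum>i\<le>k. ((real i)^2 * F i) * G (k - i)) + 2 * (\<Sum>i\<le>k. (real i * F i) * (real (k-i) * G (k - i)))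
       + (\<Sum>i\<le>k. F i * ((real (k-i))^2 * G (k - i))))
     sums (s1*c2 + 2*(m1*m2) + c1 * s2)"
    by (intro sums_add sums_mult cp Fp Gp Fs Gs)
  also have "(\<lambda>k. (\<Sum>i\<le>k. ((real i)^2 * F i) * G (k - i)) + 2 * (\<Sum>i\<le>k. (real i * F i) * (real (k-i) * G (k - i)))
       + (\<Sum>i\<le>k. F i * ((real (k-i))^2 * G (k - i))))
     = (\<lambda>k. (real k)^2 * conv f g (int k))"
  proof
    fix k
    have "(real k)^2 * conv f g (int k) = (\<Sum>i\<le>k. (real k)^2 * (F i * G (k - i)))"
      by (simp add: cv sum_distrib_left)
    also have "\<dots> = (\<Sum>i\<le>k. ((real i)^2 * F i) * G (k - i) + 2 * ((real i * F i) * (real (k-i) * G (k - i)))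
       + F i * ((real (k-i))^2 * G (k - i)))"
      by (rule sum.cong) (auto simp: of_nat_diff algebra_simps power2_eq_square)
    also have "\<dots> = (\<Sum>i\<le>k. ((real i)^2 * F i) * G (k - i)) + 2 * (\<Sum>i\<le>k. (real i * F i) * (real (k-i) * G (k - i)))
       + (\<Sum>i\<le>k. F i * ((real (k-i))^2 * G (k - i)))"
      by (simp add: sum.distrib sum_distrib_left)
    finally show "(\<Sum>i\<le>k. ((real i)^2 * F i) * G (k - i)) + 2 * (\<Sum>i\<le>k. (real i * F i) * (real (k-i) * G (k - i)))
       + (\<Sum>i\<le>k. F i * ((real (k-i))^2 * G (k - i))) = (real k)^2 * conv f g (int k)" by simp
  qed
  finally have S2: "(\<lambda>k. (real k)^2 * conv f g (int k)) sums (s1*c2 + 2*m1*m2 + c1 * s2)"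
    by (simp add: mult.assoc)
  have nn: "0 \<le> conv f g j" for j
  proof (cases "j < 0")
    case True then show ?thesis using conv_neg[OF fn gn] by simp
  next
    case False
    then obtain n where "j = int n" by (metis nonneg_int_cases not_less)
    then show ?thesis using cv Fp Gp by (simp add: sum_nonneg)
  qed
  show ?thesis unfolding mom_def using nn conv_neg[OF fn gn] S0 S1 S2 by auto
qed



lemma sum_id_real: "(\<Sum>i\<le>k. real i) = real k * (real k + 1) / 2"
  by (induction k) (simp_all add: field_simps)

lemma sum_lt_id: "(\<Sum>p<K. real p) = real K * (real K - 1) / 2"
  by (induction K) (simp_all add: field_simps)

lemma sum_lt_sq: "(\<Sum>p<K. (real p)^2) = real K * (real K - 1) * (2 * real K - 1) / 6"
  by (induction K) (simp_all add: field_simps power2_eq_square)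

lemma alg1: "(b::real) > 0 \<Longrightarrow> 1/b^2 - 1/b = (1-b)/b^2"
  by (simp add: field_simps power2_eq_square)

lemma alg2: "(b::real) > 0 \<Longrightarrow> 2 * ((1-b)/b^2 * (1/b)) - (1-b)/b^2 = (1-b)*(1+(1-b))/b^3"
  by (simp add: field_simps power2_eq_square power3_eq_cube)

lemma alg3:
  fixes b D k :: real
  assumes "b > 0"
  shows "(1-b) * (1 + (1-b)) / b ^ 3 * b + 2 * ((1-b) / b\<^sup>2) * (b * D * (k - 1) / 2) +
      1 / b * (b * D\<^sup>2 * (k - 1) * (2 * k - 1) / 6) -
      ((1-b) / b\<^sup>2 * b + 1 / b * (b * D * (k - 1) / 2))\<^sup>2 =
      D\<^sup>2 * (k\<^sup>2 - 1) / 12 + (1-b) / b\<^sup>2"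
  using assms by (simp add: field_simps power2_eq_square power3_eq_cube)

lemma mom_ar:
  assumes "0 \<le> a" "a < 1"
  shows "mom (ar_inv a) (1/(1-a)) (a/(1-a)^2) (a*(1+a)/(1-a)^3)"
proof -
  have n: "norm a < 1" using assms by simp
  have F: "(\<lambda>n. ar_inv a (int n)) = (\<lambda>n. a^n)" by (auto simp: ar_inv_def)
  have S0: "(\<lambda>n. a^n) sums (1/(1-a))" using geometric_sums[OF n] .
  have "(\<lambda>n. of_nat (Suc n) * a^n - a^n) sums (1/(1-a)^2 - 1/(1-a))"
    by (intro sums_diff geometric_deriv_sums S0 n)
  moreover have "1/(1-a)^2 - 1/(1-a) = a/(1-a)^2"
    using alg1[of "1-a"] assms by simp
  ultimately have S1: "(\<lambda>n. real n * a^n) sums (a/(1-a)^2)"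
    by (simp add: algebra_simps)
  have "(\<lambda>k. \<Sum>i\<le>k. (real i * a^i) * a^(k-i)) sums (a/(1-a)^2 * (1/(1-a)))"
    by (rule cp[OF _ _ S1 S0]) (use assms in auto)
  moreover have "(\<Sum>i\<le>k. (real i * a^i) * a^(k-i)) = real k * (real k + 1) / 2 * a^k" for k
  proof -
    have "(\<Sum>i\<le>k. (real i * a^i) * a^(k-i)) = (\<Sum>i\<le>k. real i * a^k)"
      by (rule sum.cong) (auto simp: mult.assoc power_add[symmetric])
    also have "\<dots> = real k * (real k + 1) / 2 * a^k"
      by (simp add: sum_distrib_right[symmetric] sum_id_real)
    finally show ?thesis .
  qed
  ultimately have T: "(\<lambda>k. real k * (real k + 1) / 2 * a^k) sums (a/(1-a)^2 * (1/(1-a)))"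
    by simp
  have "(\<lambda>k. 2 * (real k * (real k + 1) / 2 * a^k) - real k * a^k) sums
      (2 * (a/(1-a)^2 * (1/(1-a))) - a/(1-a)^2)"
    by (intro sums_diff sums_mult T S1)
  moreover have "2 * (a/(1-a)^2 * (1/(1-a))) - a/(1-a)^2 = a*(1+a)/(1-a)^3"
    using alg2[of "1-a"] assms by simp
  ultimately have X: "(\<lambda>k. 2 * (real k * (real k + 1) / 2 * a^k) - real k * a^k) sums (a*(1+a)/(1-a)^3)"
    by simp
  have E: "(\<lambda>k. 2 * (real k * (real k + 1) / 2 * a^k) - real k * a^k) = (\<lambda>n. (real n)^2 * a^n)"
    by (auto simp: fun_eq_iff algebra_simps power2_eq_square)
  note S2 = X[unfolded E]
  show ?thesis unfolding mom_def F using S0 S1 S2 assms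
    by (auto simp: ar_inv_def)
qed

lemma ma_sums:
  assumes "d \<ge> 1"
  shows "(\<lambda>n. h (real n) * ma_filter a K d (int n)) sums ((1-a)/real K * (\<Sum>p<K. h (real d * real p)))"
proof -
  let ?N = "(\<lambda>p. d*p) ` {..<K}"
  have "(\<lambda>n. h (real n) * ma_filter a K d (int n)) sums (\<Sum>n\<in>?N. h (real n) * ma_filter a K d (int n))"
  proof (rule sums_finite)
    fix n assume "n \<notin> ?N"
    then have *: "\<not> (\<exists>p::nat. p < K \<and> int n = int d * int p)"
      by (metis (no_types, lifting) image_eqI lessThan_iff of_nat_mult of_nat_eq_iff)
    have "ma_filter a K d (int n) = 0" unfolding ma_filter_def by (rule if_not_P[OF *])
    then show "h (real n) * ma_filter a K d (int n) = 0" by simp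
  qed simp
  moreover have "(\<Sum>n\<in>?N. h (real n) * ma_filter a K d (int n)) = (\<Sum>p<K. h (real d * real p) * ((1-a)/real K))"
  proof (subst sum.reindex)
    show "inj_on (\<lambda>p. d*p) {..<K}" using assms by (auto simp: inj_on_def)
    show "sum ((\<lambda>n. h (real n) * ma_filter a K d (int n)) \<circ> (\<lambda>p. d*p)) {..<K} = (\<Sum>p<K. h (real d * real p) * ((1-a)/real K))"
      by (rule sum.cong) (auto simp: ma_filter_def)
  qed
  ultimately show ?thesis by (simp add: sum_distrib_left[symmetric] sum_divide_distrib[symmetric] mult.commute)
qed

lemma mom_ma:
  assumes "d \<ge> 1" "K \<ge> 1" "a \<le> 1"
  shows "mom (ma_filter a K d) (1-a) ((1-a)*real d*(real K-1)/2) ((1-a)*(real d)^2*(real K-1)*(2*real K-1)/6)"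
proof -
  have S0: "(\<lambda>n. ma_filter a K d (int n)) sums (1-a)"
    using ma_sums[OF assms(1), of "\<lambda>x. 1" a K] assms(2) by simp
  have S1: "(\<lambda>n. real n * ma_filter a K d (int n)) sums ((1-a)*real d*(real K-1)/2)"
    using ma_sums[OF assms(1), of "\<lambda>x. x" a K] assms(2)
    by (simp add: sum_distrib_left[symmetric] sum_lt_id mult.assoc)
  have S2: "(\<lambda>n. (real n)^2 * ma_filter a K d (int n)) sums ((1-a)*(real d)^2*(real K-1)*(2*real K-1)/6)"
    using ma_sums[OF assms(1), of "\<lambda>x. x^2" a K] assms(2)
    by (simp add: power_mult_distrib sum_distrib_left[symmetric] sum_lt_sq mult.assoc)
  have "0 \<le> ma_filter a K d j" for j using assms by (simp add: ma_filter_def)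
  moreover have "ma_filter a K d j = 0" if "j < 0" for j
  proof -
    have "\<not>(\<exists>p::nat. p < K \<and> j = int d * int p)" using that
      by (metis mult_nonneg_nonneg of_nat_0_le_iff not_less)
    then show ?thesis unfolding ma_filter_def by (rule if_not_P)
  qed
  ultimately show ?thesis unfolding mom_def using S0 S1 S2 by auto
qed

lemma mom_layer:
  assumes "d \<ge> 1" "K \<ge> 1" "0 \<le> a" "a < 1"
  shows "\<exists>m s. mom (layer_filter a K d) 1 m s \<and>
     s - m^2 = (real d)\<^sup>2 * ((real K)\<^sup>2 - 1) / 12 + a / (1 - a)\<^sup>2"
proof -
  have a1: "1 - a \<noteq> 0" using assms by simp
  note M0 = mom_conv[OF mom_ar[OF assms(3,4)] mom_ma[OF assms(1,2) less_imp_le[OF assms(4)]]]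
  have c: "1 / (1 - a) * (1 - a) = 1" using a1 by simp
  have M: "mom (layer_filter a K d) 1
     (a / (1 - a)\<^sup>2 * (1 - a) + 1 / (1 - a) * ((1 - a) * real d * (real K - 1) / 2))
     (a * (1 + a) / (1 - a) ^ 3 * (1 - a) + 2 * (a / (1 - a)\<^sup>2) * ((1 - a) * real d * (real K - 1) / 2) +
      1 / (1 - a) * ((1 - a) * (real d)\<^sup>2 * (real K - 1) * (2 * real K - 1) / 6))"
    unfolding layer_filter_def using M0 unfolding c .
  show ?thesis
  proof (intro exI conjI)
    show "mom (layer_filter a K d) 1
     (a / (1 - a)\<^sup>2 * (1 - a) + 1 / (1 - a) * ((1 - a) * real d * (real K - 1) / 2))
     (a * (1 + a) / (1 - a) ^ 3 * (1 - a) + 2 * (a / (1 - a)\<^sup>2) * ((1 - a) * real d * (real K - 1) / 2) +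
      1 / (1 - a) * ((1 - a) * (real d)\<^sup>2 * (real K - 1) * (2 * real K - 1) / 6))"
      by (rule M)
    show "a * (1 + a) / (1 - a) ^ 3 * (1 - a) + 2 * (a / (1 - a)\<^sup>2) * ((1 - a) * real d * (real K - 1) / 2) +
      1 / (1 - a) * ((1 - a) * (real d)\<^sup>2 * (real K - 1) * (2 * real K - 1) / 6) -
      (a / (1 - a)\<^sup>2 * (1 - a) + 1 / (1 - a) * ((1 - a) * real d * (real K - 1) / 2))\<^sup>2 =
      (real d)\<^sup>2 * ((real K)\<^sup>2 - 1) / 12 + a / (1 - a)\<^sup>2"
      using alg3[of "1-a" "real d" "real K"] assms by simp
  qed
qed

lemma mom_delta: "mom delta 1 0 0"
proof -
  have "(\<lambda>n. h (real n) * delta (int n)) sums (\<Sum>n\<in>{0}. h (real n) * delta (int n))" for h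
    by (rule sums_finite) (auto simp: delta_def)
  from this[of "\<lambda>x. 1"] this[of "\<lambda>x. x"] this[of "\<lambda>x. x^2"] show ?thesis
    unfolding mom_def by (auto simp: delta_def)
qed

lemma mom_net:
  assumes "\<forall>l\<in>{1..L}. K l \<ge> 1 \<and> d l \<ge> 1 \<and> 0 \<le> a l \<and> a l < 1"
  shows "\<exists>m s. mom (net_filter a K d L) 1 m s \<and>
     s - m^2 = (\<Sum>l=1..L. (real (d l))\<^sup>2 * ((real (K l))\<^sup>2 - 1) / 12 + a l / (1 - a l)\<^sup>2)"
  using assms
proof (induction L)
  case 0
  show ?case using mom_delta by (intro exI[of _ 0] exI[of _ 0]) simp
next
  case (Suc L)
  then obtain m s where ms: "mom (net_filter a K d L) 1 m s"
    "s - m^2 = (\<Sum>l=1..L. (real (d l))\<^sup>2 * ((real (K l))\<^sup>2 - 1) / 12 + a l / (1 - a l)\<^sup>2)"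
    by auto
  have "K (Suc L) \<ge> 1 \<and> d (Suc L) \<ge> 1 \<and> 0 \<le> a (Suc L) \<and> a (Suc L) < 1"
    using Suc.prems by auto
  then obtain m' s' where ms': "mom (layer_filter (a (Suc L)) (K (Suc L)) (d (Suc L))) 1 m' s'"
    "s' - m'^2 = (real (d (Suc L)))\<^sup>2 * ((real (K (Suc L)))\<^sup>2 - 1) / 12 + a (Suc L) / (1 - a (Suc L))\<^sup>2"
    using mom_layer by blast
  have "mom (net_filter a K d (Suc L)) 1 (m' + m) (s' + 2*m'*m + s)"
    using mom_conv[OF ms'(1) ms(1)] by simp
  moreover have "(s' + 2*m'*m + s) - (m' + m)^2 = (s' - m'^2) + (s - m^2)"
    by (simp add: power2_eq_square algebra_simps)
  ultimately show ?case using ms(2) ms'(2) by (intro exI[of _ "m'+m"] exI[of _ "s' + 2*m'*m + s"]) simp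
qed

lemma to_int:
  fixes h :: "int \<Rightarrow> real"
  assumes "\<forall>j<0. h j = 0" "\<And>n. 0 \<le> h (int n)" "(\<lambda>n. h (int n)) sums S"
  shows "(h has_sum S) UNIV"
proof -
  have "summable (\<lambda>n. norm (h (int n)))" using assms by (simp add: sums_iff)
  from norm_summable_imp_has_sum[OF this assms(3)]
  have "((h \<circ> int) has_sum S) UNIV" by (simp add: comp_def)
  then have "(h has_sum S) (range int)"
    by (subst has_sum_reindex) (auto simp: inj_on_def)
  moreover have "(h has_sum S) UNIV \<longleftrightarrow> (h has_sum S) (range int)"
  proof (rule has_sum_cong_neutral)
    fix x assume "x \<in> UNIV - range int"
    then have "x < 0" by (metis DiffD2 nonneg_int_cases not_less rangeI)
    then show "h x = 0" using assms by simp
  qed auto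
  ultimately show ?thesis by simp
qed

theorem theorem1:
  fixes L :: nat and K d :: "nat \<Rightarrow> nat" and a :: "nat \<Rightarrow> real"
  assumes "L \<ge> 1"
    and "\<And>l. l \<in> {1..L} \<Longrightarrow> K l \<ge> 1"
    and "\<And>l. l \<in> {1..L} \<Longrightarrow> d l \<ge> 1"
    and "\<And>l. l \<in> {1..L} \<Longrightarrow> 0 \<le> a l \<and> a l < 1"
  shows "(erf_radius (ERF a K d L))\<^sup>2 =
           (\<Sum>l=1..L. (real (d l))\<^sup>2 * ((real (K l))\<^sup>2 - 1) / 12 + a l / (1 - a l)\<^sup>2)
         \<and> ((\<forall>l\<in>{1..L}. a l = 0) \<longrightarrow>
           (erf_radius (ERF a K d L))\<^sup>2 = (\<Sum>l=1..L. (real (d l))\<^sup>2 * ((real (K l))\<^sup>2 - 1) / 12))"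
proof -
  let ?V = "(\<Sum>l=1..L. (real (d l))\<^sup>2 * ((real (K l))\<^sup>2 - 1) / 12 + a l / (1 - a l)\<^sup>2)"
  have H: "\<forall>l\<in>{1..L}. K l \<ge> 1 \<and> d l \<ge> 1 \<and> 0 \<le> a l \<and> a l < 1"
    using assms by auto
  obtain m s where ms: "mom (net_filter a K d L) 1 m s" "s - m^2 = ?V"
    using mom_net[OF H] by blast
  let ?f = "net_filter a K d L"
  have fp: "\<And>j. 0 \<le> ?f j" and fn: "\<forall>j<0. ?f j = 0"
    and S0: "(\<lambda>n. ?f (int n)) sums 1" and S1: "(\<lambda>n. real n * ?f (int n)) sums m"
    and S2: "(\<lambda>n. (real n)^2 * ?f (int n)) sums s"
    using ms(1) by (auto simp: mom_def)
  have g: "erf_g a K d L = ?f" using fp by (simp add: fun_eq_iff erf_g_def)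
  have h0: "(?f has_sum 1) UNIV" by (rule to_int) (use fp fn S0 in auto)
  then have "infsum ?f UNIV = 1" by (rule infsumI)
  then have E: "ERF a K d L = ?f" unfolding ERF_def g by simp
  have h2: "((\<lambda>p. (real_of_int p)^2 * ?f p) has_sum s) UNIV"
    by (rule to_int) (use fp fn S2 in auto)
  have h1: "((\<lambda>p. \<bar>real_of_int p\<bar> * ?f p) has_sum m) UNIV"
    by (rule to_int) (use fp fn S1 in auto)
  have V0: "0 \<le> ?V"
  proof (rule sum_nonneg)
    fix l assume l: "l \<in> {1..L}"
    then have "K l \<ge> 1" "0 \<le> a l" using assms by auto
    then have "(real (K l))\<^sup>2 \<ge> 1" by (simp add: one_le_power)
    then show "0 \<le> (real (d l))\<^sup>2 * ((real (K l))\<^sup>2 - 1) / 12 + a l / (1 - a l)\<^sup>2"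
      using \<open>0 \<le> a l\<close> by simp
  qed
  have r: "(erf_radius (ERF a K d L))\<^sup>2 = ?V"
    unfolding erf_radius_def E infsumI[OF h1] infsumI[OF h2] using ms(2) V0 by simp
  show ?thesis
  proof (intro conjI impI)
    show "(erf_radius (ERF a K d L))\<^sup>2 = ?V" by (rule r)
    assume "\<forall>l\<in>{1..L}. a l = 0"
    then have "?V = (\<Sum>l=1..L. (real (d l))\<^sup>2 * ((real (K l))\<^sup>2 - 1) / 12)"
      by (intro sum.cong) auto
    then show "(erf_radius (ERF a K d L))\<^sup>2 = (\<Sum>l=1..L. (real (d l))\<^sup>2 * ((real (K l))\<^sup>2 - 1) / 12)"
      using r by simp
  qed
qed

end
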